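(* Let $n$ be a positive integer and let $A\subseteq\mathbb{Z}/n\mathbb{Z}$ be a basis of $\mathbb{Z}/n\mathbb{Z}$. Then $|A|\cdot\rho(A)<2n$.
   Context: A subset $A\subseteq\mathbb{Z}/n\mathbb{Z}$ is a basis if $hA=\mathbb{Z}/n\mathbb{Z}$ for some positive integer $h$, where $hA=\{a_1+\dots+a_h: a_i\in A\}$; the least such $h$ is denoted $\rho(A)$. *)

theory Defs
  imports Main
begin

text \<open>Z/nZ is modelled as the residues {0..<n} of nat with addition modulo n.
  sumset n h A = hA = {a_1 + ... + a_h mod n : a_i in A}.\<close>

fun sumset :: "nat \<Rightarrow> nat \<Rightarrow> nat set \<Rightarrow> nat set" where
  "sumset n 0 A = {0}"
| "sumset n (Suc h) A = {(x + a) mod n | x a. x \<in> sumset n h A \<and> a \<in> A}"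

definition is_basis :: "nat \<Rightarrow> nat set \<Rightarrow> bool" where
  "is_basis n A \<longleftrightarrow> A \<subseteq> {0..<n} \<and> (\<exists>h>0. sumset n h A = {0..<n})"

definition rho :: "nat \<Rightarrow> nat set \<Rightarrow> nat" where
  "rho n A = (LEAST h. h > 0 \<and> sumset n h A = {0..<n})"

end

theory Submission
  imports Defs "HOL-Number_Theory.Cong"
begin

definition ps :: "nat \<Rightarrow> nat set \<Rightarrow> nat set \<Rightarrow> nat set" where
  "ps n P Q = {(p+q) mod n | p q. p \<in> P \<and> q \<in> Q}"

lemma sumset_Suc': "sumset n (Suc h) A = ps n (sumset n h A) A"
  by (simp add: ps_def)

lemma tr_inj: "inj_on (\<lambda>x. (x + c) mod n) {0..<(n::nat)}"
proof (rule inj_onI)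
  fix x y assume "x \<in> {0..<n}" "y \<in> {0..<n}" "(x + c) mod n = (y + c) mod n"
  then show "x = y"
    by (metis atLeastLessThan_iff cong_add_rcancel_nat cong_def cong_less_modulus_unique_nat)
qed

lemma ps_sub: "(n::nat) > 0 \<Longrightarrow> ps n P Q \<subseteq> {0..<n}"
  by (auto simp: ps_def)

lemma scherk:
  fixes n :: nat
  assumes n0: "n > 0"
  and "P \<subseteq> {0..<n}" "Q \<subseteq> {0..<n}" "p0 \<in> P" "q0 \<in> Q"
    "\<forall>p\<in>P. \<forall>q\<in>Q. (p+q) mod n = (p0+q0) mod n \<longrightarrow> p = p0 \<and> q = q0"
  shows "card P + card Q \<le> card (ps n P Q) + 1"
  using assms(2-)
proof (induction "card Q" arbitrary: P Q rule: less_induct)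
  case (less Q P)
  have fQ: "finite Q" using less.prems(2) finite_subset by blast
  have fP: "finite P" using less.prems(1) finite_subset by blast
  have q0n: "q0 < n" using less.prems(2,4) by auto
  show ?case
  proof (cases "Q = {q0}")
    case True
    have "ps n P Q = (\<lambda>p. (p + q0) mod n) ` P" by (auto simp: ps_def True)
    moreover have "inj_on (\<lambda>p. (p + q0) mod n) P"
      using tr_inj less.prems(1) inj_on_subset by blast
    ultimately have "card (ps n P Q) = card P" by (simp add: card_image)
    then show ?thesis using True by simp
  next
    case False
    then obtain q1 where q1: "q1 \<in> Q" "q1 \<noteq> q0" using less.prems(4) by blast
    have "\<exists>p\<in>P. \<exists>q\<in>Q. ((p + (n - q0)) mod n + q) mod n \<notin> P"
    proof (rule ccontr)
      assume "\<not> ?thesis"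
      hence cl: "\<forall>p\<in>P. \<forall>q\<in>Q. ((p + (n - q0)) mod n + q) mod n \<in> P" by blast
      define f where "f = (\<lambda>p. (p + (n - q0 + q1)) mod n)"
      have feq: "f p = ((p + (n - q0)) mod n + q1) mod n" for p
        unfolding f_def by (simp add: mod_add_left_eq add.assoc)
      have fP': "f ` P \<subseteq> P" using cl q1 feq by auto
      have "inj_on f P" unfolding f_def using tr_inj less.prems(1) inj_on_subset by blast
      hence "f ` P = P" using endo_inj_surj fP fP' by blast
      then obtain p' where p': "p' \<in> P" "f p' = p0" using less.prems(3) by (metis imageE)
      have "(p0 + q0) mod n = (p' + (n - q0 + q1) + q0) mod n"
        using p'(2) unfolding f_def by (metis mod_add_left_eq)
      also have "\<dots> = ((p' + q1) + n) mod n" using q0n by (simp add: algebra_simps)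
      also have "\<dots> = (p' + q1) mod n" by (rule mod_add_self2)
      finally have "(p' + q1) mod n = (p0 + q0) mod n" by simp
      then have "q1 = q0" using less.prems(5) p'(1) q1(1) by blast
      then show False using q1(2) by simp
    qed
    then obtain p1 q2 where p1: "p1 \<in> P" "q2 \<in> Q" "((p1 + (n - q0)) mod n + q2) mod n \<notin> P"
      by blast
    define e where "e = (p1 + (n - q0)) mod n"
    have p1n: "p1 < n" using p1(1) less.prems(1) by auto
    have eq0: "(e + q0) mod n = p1"
    proof -
      have "(e + q0) mod n = (p1 + (n - q0) + q0) mod n" unfolding e_def by (simp add: mod_add_left_eq)
      also have "\<dots> = (p1 + n) mod n" using q0n by simp
      finally show ?thesis using p1n by simp
    qed
    define T where "T = (\<lambda>q. (e + q) mod n)"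
    define P' where "P' = P \<union> T ` Q"
    define Q' where "Q' = {q\<in>Q. T q \<in> P}"
    have Q'sub: "Q' \<subset> Q" using p1 by (auto simp: Q'_def T_def e_def)
    have cQ': "card Q' < card Q" using psubset_card_mono fQ Q'sub by blast
    have q0Q': "q0 \<in> Q'" using eq0 p1 less.prems(4) by (simp add: Q'_def T_def)
    have P'sub: "P' \<subseteq> {0..<n}" using less.prems(1) n0 by (auto simp: P'_def T_def)
    have Q'sub2: "Q' \<subseteq> {0..<n}" using less.prems(2) Q'_def by auto
    have p0P': "p0 \<in> P'" using less.prems(3) by (simp add: P'_def)
    have Tsum: "(T a + b) mod n = (e + (a + b)) mod n" for a b
      unfolding T_def by (metis mod_add_left_eq add.assoc)
    have Tswap: "(T a + b) mod n = (T b + a) mod n" for a b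
      using Tsum[of a b] Tsum[of b a] by (simp add: add.commute)
    have uniq: "\<forall>p\<in>P'. \<forall>q\<in>Q'. (p+q) mod n = (p0+q0) mod n \<longrightarrow> p = p0 \<and> q = q0"
    proof (intro ballI impI)
      fix p q assume pP: "p \<in> P'" and qQ: "q \<in> Q'" and eq: "(p+q) mod n = (p0+q0) mod n"
      have qQ1: "q \<in> Q" "T q \<in> P" using qQ by (auto simp: Q'_def)
      show "p = p0 \<and> q = q0"
      proof (cases "p \<in> P")
        case True
        then show ?thesis using less.prems(5) qQ1 eq by blast
      next
        case False
        then obtain q' where q': "q' \<in> Q" "p = T q'" using pP by (auto simp: P'_def)
        have "(T q + q') mod n = (p0 + q0) mod n" using eq q' Tswap by simp
        then have "T q = p0 \<and> q' = q0" using less.prems(5) qQ1 q'(1) by blast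
        then have "p = p1" using q' eq0 by (simp add: T_def)
        then show ?thesis using less.prems(5) p1(1) qQ1 eq by blast
      qed
    qed
    have IH: "card P' + card Q' \<le> card (ps n P' Q') + 1"
      using less.hyps[OF cQ' P'sub Q'sub2 p0P' q0Q' uniq] .
    have psub: "ps n P' Q' \<subseteq> ps n P Q"
    proof
      fix x assume "x \<in> ps n P' Q'"
      then obtain p q where pq: "x = (p+q) mod n" "p \<in> P'" "q \<in> Q'" by (auto simp: ps_def)
      have qQ1: "q \<in> Q" "T q \<in> P" using pq(3) by (auto simp: Q'_def)
      show "x \<in> ps n P Q"
      proof (cases "p \<in> P")
        case True
        then show ?thesis using pq qQ1 by (auto simp: ps_def)
      next
        case False
        then obtain q' where q': "q' \<in> Q" "p = T q'" using pq(2) by (auto simp: P'_def)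
        have "x = (T q + q') mod n" using pq(1) q' Tswap by simp
        then show ?thesis using qQ1 q' unfolding ps_def by blast
      qed
    qed
    have cps: "card (ps n P' Q') \<le> card (ps n P Q)"
    proof (rule card_mono[OF _ psub])
      show "finite (ps n P Q)" using ps_sub[OF n0] finite_subset by blast
    qed
    have injT: "inj_on T Q"
    proof -
      have "inj_on (\<lambda>x. (x + e) mod n) Q" using tr_inj[of e n] less.prems(2) inj_on_subset by blast
      moreover have "(\<lambda>x. (x + e) mod n) = T" unfolding T_def by (simp add: add.commute)
      ultimately show ?thesis by simp
    qed
    have cTQ: "card (T ` Q) = card Q" using injT card_image by blast
    have int: "P \<inter> T ` Q = T ` Q'" by (auto simp: Q'_def)
    have cint: "card (P \<inter> T ` Q) = card Q'"
    proof -
      have "inj_on T Q'" using inj_on_subset[OF injT] Q'sub by blast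
      then show ?thesis using int card_image by metis
    qed
    have "card P' + card (P \<inter> T ` Q) = card P + card (T ` Q)"
      using card_Un_Int[OF fP, of "T ` Q"] fQ unfolding P'_def by simp
    then have "card P' + card Q' = card P + card Q" using cTQ cint by simp
    then show ?thesis using IH cps by linarith
  qed
qed


lemma sumset_sub: assumes "(n::nat) > 0" shows "sumset n k A \<subseteq> {0..<n}"
proof (cases k)
  case 0 then show ?thesis using assms by simp
next
  case (Suc j)
  show ?thesis unfolding Suc using assms by auto
qed

lemma sumset_fin: assumes "(n::nat) > 0" shows "finite (sumset n k A)"
  using finite_subset[OF sumset_sub[OF assms]] by simp

definition sh :: "nat \<Rightarrow> nat \<Rightarrow> nat set \<Rightarrow> nat set" where
  "sh n t X = (\<lambda>x. (x + t) mod n) ` X"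

lemma sumset_sh: "sumset n k (sh n t A) = sh n (k*t) (sumset n k A)"
proof (induction k)
  case 0
  then show ?case by (simp add: sh_def)
next
  case (Suc k)
  have key: "((y + k*t) mod n + (b + t) mod n) mod n = ((y + b) mod n + Suc k * t) mod n" for y b
  proof -
    have "((y + k*t) mod n + (b + t) mod n) mod n = ((y + k*t) + (b + t)) mod n"
      by (simp add: mod_add_eq)
    also have "\<dots> = ((y + b) + Suc k * t) mod n" by (simp add: algebra_simps)
    also have "\<dots> = ((y + b) mod n + Suc k * t) mod n" by (simp add: mod_add_left_eq)
    finally show ?thesis .
  qed
  show ?case
  proof
    show "sumset n (Suc k) (sh n t A) \<subseteq> sh n (Suc k * t) (sumset n (Suc k) A)"
    proof
      fix z assume "z \<in> sumset n (Suc k) (sh n t A)"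
      then obtain x a where xa: "z = (x + a) mod n" "x \<in> sumset n k (sh n t A)" "a \<in> sh n t A" by auto
      then obtain y b where yb: "x = (y + k*t) mod n" "y \<in> sumset n k A" "a = (b + t) mod n" "b \<in> A"
        using Suc by (auto simp: sh_def)
      have "z = ((y + b) mod n + Suc k * t) mod n" using xa yb key by simp
      moreover have "(y + b) mod n \<in> sumset n (Suc k) A" using yb by auto
      ultimately show "z \<in> sh n (Suc k * t) (sumset n (Suc k) A)" by (auto simp: sh_def)
    qed
  next
    show "sh n (Suc k * t) (sumset n (Suc k) A) \<subseteq> sumset n (Suc k) (sh n t A)"
    proof
      fix z assume "z \<in> sh n (Suc k * t) (sumset n (Suc k) A)"
      then obtain w where w: "z = (w + Suc k * t) mod n" "w \<in> sumset n (Suc k) A" by (auto simp: sh_def)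
      then obtain y b where yb: "w = (y + b) mod n" "y \<in> sumset n k A" "b \<in> A" by auto
      have "(y + k*t) mod n \<in> sumset n k (sh n t A)" using Suc yb by (auto simp: sh_def)
      moreover have "(b + t) mod n \<in> sh n t A" using yb by (auto simp: sh_def)
      moreover have "z = ((y + k*t) mod n + (b + t) mod n) mod n" using w yb key by simp
      ultimately show "z \<in> sumset n (Suc k) (sh n t A)" by auto
    qed
  qed
qed

lemma card_sh: assumes "X \<subseteq> {0..<n}" shows "card (sh n t X) = card X"
proof -
  have "inj_on (\<lambda>x. (x+t) mod n) X" using tr_inj inj_on_subset assms by blast
  then show ?thesis by (simp add: sh_def card_image)
qed

lemma sh_sub: "(n::nat) > 0 \<Longrightarrow> sh n t X \<subseteq> {0..<n}"
  by (auto simp: sh_def)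

lemma sh_full: assumes "(n::nat) > 0" "X \<subseteq> {0..<n}"
  shows "sh n t X = {0..<n} \<longleftrightarrow> X = {0..<n}"
proof
  assume "sh n t X = {0..<n}"
  have "card X = card (sh n t X)" using card_sh[OF assms(2)] by simp
  also have "\<dots> = card {0..<n}" using \<open>sh n t X = {0..<n}\<close> by simp
  finally show "X = {0..<n}" using card_subset_eq[OF _ assms(2)] by simp
next
  assume X: "X = {0..<n}"
  have "card (sh n t X) = card {0..<n}" using card_sh[OF assms(2)] X by simp
  then show "sh n t X = {0..<n}" using card_subset_eq[OF _ sh_sub[OF assms(1)]] by simp
qed

lemma main0:
  fixes n :: nat and A :: "nat set"
  assumes n0: "n > 0" and Asub: "A \<subseteq> {0..<n}" and A0: "0 \<in> A"
    and ex: "\<exists>h>0. sumset n h A = {0..<n}"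
  shows "card A * rho n A < 2 * n"
proof -
  define T where "T = (\<lambda>k. sumset n k A)"
  define h where "h = rho n A"
  have hP: "h > 0 \<and> T h = {0..<n}" unfolding h_def rho_def T_def using LeastI_ex[OF ex] .
  have notfull: "0 < k \<Longrightarrow> k < h \<Longrightarrow> T k \<noteq> {0..<n}" for k
    unfolding h_def rho_def T_def using not_less_Least by blast
  have Tsub: "T k \<subseteq> {0..<n}" for k unfolding T_def using sumset_sub[OF n0] .
  have Tfin: "finite (T k)" for k unfolding T_def using sumset_fin[OF n0] .
  have Tcard: "card (T k) \<le> n" for k using card_mono[OF _ Tsub] by fastforce
  have Tmono: "T k \<subseteq> T (Suc k)" for k
  proof
    fix x assume xT: "x \<in> T k"
    then have xn: "x < n" using Tsub[of k] by auto
    have "(x + 0) mod n \<in> sumset n (Suc k) A"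
      using xT A0 unfolding T_def sumset.simps by blast
    then show "x \<in> T (Suc k)" using xn unfolding T_def by simp
  qed
  have stable: "T (Suc k) = T k \<Longrightarrow> T (k + j) = T k" for k j
  proof (induction j)
    case 0 then show ?case by simp
  next
    case (Suc j)
    have "T (k + Suc j) = ps n (T (k + j)) A" unfolding T_def by (simp only: add_Suc_right sumset_Suc')
    also have "\<dots> = ps n (T k) A" using Suc by simp
    also have "\<dots> = T (Suc k)" unfolding T_def by (simp only: sumset_Suc')
    finally show ?case using Suc.prems by simp
  qed
  have cA: "card A > 0" using A0 Asub finite_subset card_gt_0_iff by fastforce
  have pair: "Suc j < h \<Longrightarrow> card (T j) + card A \<le> card (T (Suc (Suc j)))" for j
  proof -
    assume jh: "Suc j < h"
    have ne: "T (Suc (Suc j)) \<noteq> T (Suc j)"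
    proof
      assume "T (Suc (Suc j)) = T (Suc j)"
      then have "T (Suc j + (h - Suc j)) = T (Suc j)" using stable by blast
      then have "T h = T (Suc j)" using jh by simp
      then show False using hP notfull[of "Suc j"] jh by simp
    qed
    then obtain u where u: "u \<in> T (Suc (Suc j))" "u \<notin> T (Suc j)" using Tmono[of "Suc j"] by blast
    then obtain y0 a0 where ya: "u = (y0 + a0) mod n" "y0 \<in> T (Suc j)" "a0 \<in> A"
      unfolding T_def by auto
    have y0n: "y0 \<notin> T j" using u ya unfolding T_def by auto
    define Y where "Y = insert y0 (T j)"
    have Ysub: "Y \<subseteq> {0..<n}" using Tsub[of "Suc j"] Tsub[of j] ya(2) Y_def by auto
    have uniq: "\<forall>p\<in>Y. \<forall>q\<in>A. (p+q) mod n = (y0+a0) mod n \<longrightarrow> p = y0 \<and> q = a0"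
    proof (intro ballI impI)
      fix p q assume p: "p \<in> Y" and q: "q \<in> A" and eq: "(p+q) mod n = (y0+a0) mod n"
      have "p \<notin> T j"
      proof
        assume "p \<in> T j"
        then have "(p+q) mod n \<in> T (Suc j)" using q unfolding T_def by auto
        then show False using eq u ya by simp
      qed
      then have "p = y0" using p Y_def by auto
      moreover have "q = a0"
      proof -
        have "(q + y0) mod n = (a0 + y0) mod n" using eq \<open>p = y0\<close> by (simp add: add.commute)
        then show ?thesis using tr_inj[of y0 n] q ya(3) Asub unfolding inj_on_def by blast
      qed
      ultimately show "p = y0 \<and> q = a0" by simp
    qed
    have sch: "card Y + card A \<le> card (ps n Y A) + 1"
      using scherk[OF n0 Ysub Asub _ ya(3) uniq] Y_def by simp
    have "ps n Y A \<subseteq> T (Suc (Suc j))"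
    proof
      fix x assume "x \<in> ps n Y A"
      then obtain p q where pq: "x = (p+q) mod n" "p \<in> Y" "q \<in> A" by (auto simp: ps_def)
      have "p \<in> T (Suc j)" using pq(2) Y_def ya(2) Tmono by auto
      then show "x \<in> T (Suc (Suc j))" using pq unfolding T_def by auto
    qed
    then have "card (ps n Y A) \<le> card (T (Suc (Suc j)))" using card_mono Tfin by blast
    moreover have "card Y = card (T j) + 1" using Y_def y0n Tfin by simp
    ultimately show ?thesis using sch by linarith
  qed
  have T1: "T 1 = A"
  proof -
    have "T 1 = {(0 + a) mod n | a. a \<in> A}" unfolding T_def by auto
    also have "\<dots> = A" using Asub by force
    finally show ?thesis .
  qed
  have odd: "2*m+1 \<le> h \<Longrightarrow> (m+1) * card A \<le> card (T (2*m+1))" for m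
  proof (induction m)
    case 0 then show ?case using T1 by simp
  next
    case (Suc m)
    have "card (T (2*m+1)) + card A \<le> card (T (Suc (Suc (2*m+1))))"
      using pair[of "2*m+1"] Suc.prems by simp
    then show ?case using Suc by simp
  qed
  have even: "2*m \<le> h \<Longrightarrow> m * card A + 1 \<le> card (T (2*m))" for m
  proof (induction m)
    case 0 then show ?case unfolding T_def by simp
  next
    case (Suc m)
    have "card (T (2*m)) + card A \<le> card (T (Suc (Suc (2*m))))"
      using pair[of "2*m"] Suc.prems by simp
    then show ?case using Suc by simp
  qed
  show ?thesis
  proof (cases "odd h")
    case True
    then obtain m where m: "h = 2*m+1" using oddE by blast
    have "(m+1) * card A \<le> n" using odd[of m] m Tcard[of h] by simp
    moreover have "h * card A + card A = 2 * ((m+1) * card A)" using m by (simp add: algebra_simps)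
    ultimately show ?thesis using cA unfolding h_def by (simp add: mult.commute) 
  next
    case False
    then obtain m where m: "h = 2*m" using evenE by blast
    have le: "m * card A + 1 \<le> n" using even[of m] m Tcard[of h] by simp
    have eq: "card A * h = 2 * (m * card A)" using m by (simp add: algebra_simps)
    have "card A * h < 2 * n" using le eq by linarith
    then show ?thesis unfolding h_def .
  qed
qed

theorem mainTheorem5:
  fixes n :: nat and A :: "nat set"
  assumes "n > 0" and "is_basis n A"
  shows "card A * rho n A < 2 * n"
proof -
  have Asub: "A \<subseteq> {0..<n}" and ex: "\<exists>h>0. sumset n h A = {0..<n}"
    using assms(2) unfolding is_basis_def by auto
  obtain h where h: "h > 0" "sumset n h A = {0..<n}" using ex by blast
  obtain k where k: "h = Suc k" using h(1) gr0_conv_Suc by blast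
  have "A \<noteq> {}"
  proof
    assume "A = {}"
    then have "sumset n h A = {}" using k by simp
    then show False using h(2) assms(1) by simp
  qed
  then obtain a where a: "a \<in> A" by blast
  define A' where "A' = sh n (n - a) A"
  have an: "a < n" using a Asub by auto
  have A'sub: "A' \<subseteq> {0..<n}" using sh_sub[OF assms(1)] A'_def by simp
  have "(a + (n - a)) mod n = 0" using an by simp
  then have A'0: "0 \<in> A'" using a unfolding A'_def sh_def by (metis image_eqI)
  have cA': "card A' = card A" using card_sh[OF Asub] A'_def by simp
  have eqv: "(sumset n k A' = {0..<n}) = (sumset n k A = {0..<n})" for k
  proof -
    have "sumset n k A' = sh n (k*(n-a)) (sumset n k A)" unfolding A'_def by (rule sumset_sh)
    then show ?thesis using sh_full[OF assms(1) sumset_sub[OF assms(1)], of "k*(n-a)" k A]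
      by simp
  qed
  have rr: "rho n A' = rho n A" unfolding rho_def by (simp only: eqv)
  have ex': "\<exists>h>0. sumset n h A' = {0..<n}" using ex by (simp only: eqv)
  show ?thesis using main0[OF assms(1) A'sub A'0 ex'] cA' rr by simp
qed

end
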